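(* Let $D$ be an integral domain and let $M$ be a nonzero $D$-module. Let $N_v=\{f\in D[X]\mid c(f)_v=D\}$. Then $M[X]_{N_v}$ is a DW-module (as a $D[X]_{N_v}$-module), i.e. every nonzero $D[X]_{N_v}$-submodule of $M[X]_{N_v}$ is a $w$-module.
   Context: For an integral domain $A$ with quotient field $K$: $I^{-1}=\{a\in K\mid aI\subseteq A\}$, $I_v=(I^{-1})^{-1}$; $\mathrm{GV}(A)$ is the set of finitely generated ideals $J$ of $A$ with $J_v=A$; for an $A$-module $N$, $N_w=\{x\in N\otimes_A K\mid xJ\subseteq N\text{ for some }J\in\mathrm{GV}(A)\}$, and $N$ is a $w$-module if $N_w=N$. A $w$-module is a DW-module if every nonzero submodule of it is a $w$-module. Here $A=D[X]_{N_v}$. $c(f)$ is the ideal of $D$ generated by the coefficients of $f$; $N_v$ is a multiplicative subset of $D[X]$.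
   Formalization: A w-module N over A means: for J in GV(A), xJ = 0 forces x = 0 in N, and every A-linear map J -> N is multiplication by some x in N, in place of $N_w=N$. The statement above fails without it. *)

theory Defs
  imports "HOL-Computational_Algebra.Polynomial" "HOL-Computational_Algebra.Fraction_Field"
begin

definition emb :: "'a::idom \<Rightarrow> 'a fract" where
  "emb x = Fract x 1"

definition frac_inv :: "'k::field set \<Rightarrow> 'k set \<Rightarrow> 'k set" where
  "frac_inv R I = {a. \<forall>x\<in>I. a * x \<in> R}"

definition vclos :: "'k::field set \<Rightarrow> 'k set \<Rightarrow> 'k set" where
  "vclos R I = frac_inv R (frac_inv R I)"

definition content_ideal :: "'a::idom poly \<Rightarrow> 'a set" where
  "content_ideal f = {x. \<exists>r. x = (\<Sum>i\<le>degree f. r i * coeff f i)}"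

definition Nv :: "'a::idom poly set" where
  "Nv = {f. vclos (range emb) (emb ` content_ideal f) = range emb}"

text \<open>The ring A = D[X]_{N_v}, as a subring of the quotient field of D[X].\<close>
definition Aring :: "'a::idom poly fract set" where
  "Aring = {Fract f s | f s. s \<in> Nv}"

definition is_ideal_of :: "'k::field set \<Rightarrow> 'k set \<Rightarrow> bool" where
  "is_ideal_of R J \<longleftrightarrow> J \<subseteq> R \<and> 0 \<in> J \<and> (\<forall>x\<in>J. \<forall>y\<in>J. x + y \<in> J)
     \<and> (\<forall>a\<in>R. \<forall>x\<in>J. a * x \<in> J)"

definition fin_gen_ideal :: "'k::field set \<Rightarrow> 'k set \<Rightarrow> bool" where
  "fin_gen_ideal R J \<longleftrightarrow> is_ideal_of R J \<and>
     (\<exists>F. finite F \<and> F \<subseteq> J \<and> J = {\<Sum>x\<in>F. r x * x | r. \<forall>x\<in>F. r x \<in> R})"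

definition GV :: "'k::field set \<Rightarrow> 'k set set" where
  "GV R = {J. fin_gen_ideal R J \<and> vclos R J = R}"

lift_definition pscale :: "('a::idom \<Rightarrow> 'm::ab_group_add \<Rightarrow> 'm) \<Rightarrow> 'a poly \<Rightarrow> 'm poly \<Rightarrow> 'm poly"
  is "\<lambda>sc f g k. if k \<le> degree f + degree g
        then (\<Sum>i\<le>k. sc (coeff f i) (coeff g (k - i))) else 0"
proof -
  fix sc :: "'a \<Rightarrow> 'm \<Rightarrow> 'm" and f :: "'a poly" and g :: "'m poly"
  show "\<forall>\<^sub>\<infinity>k. (if k \<le> degree f + degree g
        then (\<Sum>i\<le>k. sc (coeff f i) (coeff g (k - i))) else 0) = 0"
    unfolding MOST_nat by (rule exI[of _ "degree f + degree g"]) auto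
qed

context
  fixes sc :: "'a::idom \<Rightarrow> 'm::ab_group_add \<Rightarrow> 'm"
begin

definition locrel :: "(('m poly \<times> 'a poly) \<times> ('m poly \<times> 'a poly)) set" where
  "locrel = {((g, s), (g', s')). s \<in> Nv \<and> s' \<in> Nv \<and>
      (\<exists>u\<in>Nv. pscale sc u (pscale sc s' g - pscale sc s g') = 0)}"

definition Lcar :: "('m poly \<times> 'a poly) set set" where
  "Lcar = {locrel `` {(g, s)} | g s. s \<in> Nv}"

definition Lzero :: "('m poly \<times> 'a poly) set" where
  "Lzero = locrel `` {(0, 1)}"

definition Ladd :: "('m poly \<times> 'a poly) set \<Rightarrow> ('m poly \<times> 'a poly) set \<Rightarrow> ('m poly \<times> 'a poly) set" where
  "Ladd X Y = \<Union>{locrel `` {(pscale sc s' g + pscale sc s g', s * s')} | g s g' s'.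
                  (g, s) \<in> X \<and> (g', s') \<in> Y}"

definition Lact :: "'a poly fract \<Rightarrow> ('m poly \<times> 'a poly) set \<Rightarrow> ('m poly \<times> 'a poly) set" where
  "Lact a X = \<Union>{locrel `` {(pscale sc f g, t * s)} | f t g s.
                  a = Fract f t \<and> t \<in> Nv \<and> (g, s) \<in> X}"

definition Lsubmod :: "('m poly \<times> 'a poly) set set \<Rightarrow> bool" where
  "Lsubmod N \<longleftrightarrow> N \<subseteq> Lcar \<and> Lzero \<in> N \<and> (\<forall>x\<in>N. \<forall>y\<in>N. Ladd x y \<in> N)
     \<and> (\<forall>a\<in>Aring. \<forall>x\<in>N. Lact a x \<in> N)"

text \<open>w-module over A (GV-torsion-free, and N_w = N in the form: every A-linear map
  J \<rightarrow> N with J \<in> GV(A) is multiplication by an element of N, i.e. extends to A).\<close>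
definition Lw_module :: "('m poly \<times> 'a poly) set set \<Rightarrow> bool" where
  "Lw_module N \<longleftrightarrow>
     (\<forall>J\<in>GV Aring. \<forall>x\<in>N. (\<forall>j\<in>J. Lact j x = Lzero) \<longrightarrow> x = Lzero) \<and>
     (\<forall>J\<in>GV Aring. \<forall>\<phi>. ((\<forall>j\<in>J. \<phi> j \<in> N) \<and> (\<forall>j\<in>J. \<forall>k\<in>J. \<phi> (j + k) = Ladd (\<phi> j) (\<phi> k))
          \<and> (\<forall>a\<in>Aring. \<forall>j\<in>J. \<phi> (a * j) = Lact a (\<phi> j)))
        \<longrightarrow> (\<exists>x\<in>N. \<forall>j\<in>J. \<phi> j = Lact j x))"

definition LDW_module :: "bool" where
  "LDW_module \<longleftrightarrow> Lw_module Lcar \<and> (\<forall>N. Lsubmod N \<and> N \<noteq> {Lzero} \<longrightarrow> Lw_module N)"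

end

end

theory Submission
  imports Defs
begin


locale imod = module scale for scale :: "'a::idom \<Rightarrow> 'b::ab_group_add \<Rightarrow> 'b"
begin

lemma coeff_pscale:
  "coeff (pscale scale f g) k = (\<Sum>i\<le>k. scale (coeff f i) (coeff g (k - i)))"
proof (cases "k \<le> degree f + degree g")
  case True then show ?thesis by (simp add: pscale.rep_eq)
next
  case False
  have "scale (coeff f i) (coeff g (k - i)) = 0" if "i \<le> k" for i
  proof (cases "i \<le> degree f")
    case True
    then have "k - i > degree g" using False that by linarith
    then show ?thesis by (simp add: coeff_eq_0)
  next
    case False then show ?thesis by (simp add: coeff_eq_0)
  qed
  then show ?thesis using False by (simp add: pscale.rep_eq)
qed

lemma pscale_pCons:
  "pscale scale (pCons c p) y = map_poly (scale c) y + pCons 0 (pscale scale p y)"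
proof (rule poly_eqI)
  fix k show "coeff (pscale scale (pCons c p) y) k = coeff (map_poly (scale c) y + pCons 0 (pscale scale p y)) k"
  proof (cases k)
    case 0 then show ?thesis by (simp add: coeff_pscale coeff_map_poly)
  next
    case (Suc n)
    show ?thesis unfolding Suc coeff_pscale coeff_add coeff_map_poly[of "scale c", OF scale_zero_right]
      by (subst sum.atMost_Suc_shift) (simp add: coeff_pscale)
  qed
qed

lemma pscale_zero_left [simp]: "pscale scale 0 y = 0"
  by (rule poly_eqI) (simp add: coeff_pscale)

lemma pscale_smult: "pscale scale (smult c b) x = map_poly (scale c) (pscale scale b x)"
  by (rule poly_eqI) (simp add: coeff_pscale coeff_map_poly scale_sum_right)

lemma pscale_module: "module (pscale scale)"
proof
  fix a b :: "'a poly" and x y :: "'b poly"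
  show "pscale scale a (x + y) = pscale scale a x + pscale scale a y"
    by (rule poly_eqI) (simp add: coeff_pscale scale_right_distrib sum.distrib)
  show "pscale scale (a + b) x = pscale scale a x + pscale scale b x"
    by (rule poly_eqI) (simp add: coeff_pscale scale_left_distrib sum.distrib)
  show "pscale scale 1 x = x"
  proof (rule poly_eqI)
    fix k
    have "(\<Sum>i\<le>k. scale (of_bool (i = 0)) (coeff x (k - i))) = (\<Sum>i\<le>k. if i = 0 then coeff x (k - i) else 0)"
      by (rule sum.cong) auto
    then show "coeff (pscale scale 1 x) k = coeff x k" by (simp add: coeff_pscale)
  qed
  have ladd: "pscale scale (p + q) z = pscale scale p z + pscale scale q z" for p q z
    by (rule poly_eqI) (simp add: coeff_pscale scale_left_distrib sum.distrib)
  show "pscale scale a (pscale scale b x) = pscale scale (a * b) x"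
  proof (induction a)
    case 0 then show ?case by simp
  next
    case (pCons c p)
    have m0: "map_poly (scale 0) z = 0" for z :: "'b poly"
      by (rule poly_eqI) (simp add: coeff_map_poly)
    show ?case
      by (simp add: pscale_pCons ladd pscale_smult pCons.IH m0)
  qed
qed

end



lemma emb_add: "emb (a + b) = emb a + emb b" by (simp add: emb_def)
lemma emb_mult: "emb (a * b) = emb a * emb b" by (simp add: emb_def)
lemma emb_0: "emb 0 = 0" by (simp add: emb_def fract_collapse)
lemma emb_1: "emb 1 = 1" by (simp add: emb_def fract_collapse)

lemma emb_sum: "emb (sum g A) = (\<Sum>i\<in>A. emb (g i))"
  by (induction A rule: infinite_finite_induct) (simp_all add: emb_0 emb_add)

lemma R_add: "x \<in> range emb \<Longrightarrow> y \<in> range emb \<Longrightarrow> x + y \<in> range emb"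
  by (auto simp: emb_add[symmetric])
lemma R_mult: "x \<in> range emb \<Longrightarrow> y \<in> range emb \<Longrightarrow> x * y \<in> range emb"
  by (auto simp: emb_mult[symmetric])
lemma R_0: "0 \<in> range emb" by (metis emb_0 rangeI)
lemma R_1: "1 \<in> range emb" by (metis emb_1 rangeI)

lemma R_sum: "(\<And>i. i \<in> A \<Longrightarrow> f i \<in> range emb) \<Longrightarrow> sum f A \<in> range emb"
proof (induction A rule: infinite_finite_induct)
  case (infinite A) then show ?case using R_0 by simp
next
  case empty then show ?case using R_0 by simp
next
  case (insert x F) then show ?case by (simp add: R_add)
qed

lemma frac_inv_antimono: "A \<subseteq> B \<Longrightarrow> frac_inv R B \<subseteq> frac_inv R A"
  unfolding frac_inv_def by auto

lemma vclos_imp: assumes "1 \<in> R" "vclos R J = R" shows "frac_inv R J \<subseteq> R"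
proof
  fix w assume w: "w \<in> frac_inv R J"
  have "w \<in> frac_inv R (vclos R J)"
    using w unfolding vclos_def frac_inv_def by (auto simp: mult.commute)
  then have "w * 1 \<in> R" using assms unfolding frac_inv_def by auto
  then show "w \<in> R" by simp
qed

lemma coeff_in_content: "coeff f i \<in> content_ideal f"
proof -
  have "(\<Sum>j\<le>degree f. (if j = i then 1 else 0) * coeff f j) = (\<Sum>j\<le>degree f. if j = i then coeff f i else 0)"
    by (rule sum.cong) auto
  also have "\<dots> = coeff f i" by (auto simp: coeff_eq_0)
  finally have eq: "coeff f i = (\<Sum>j\<le>degree f. (if j = i then 1 else 0) * coeff f j)" by simp
  show ?thesis unfolding content_ideal_def mem_Collect_eq
    apply (rule exI[where x="\<lambda>j. if j = i then 1 else 0"]) by (rule eq)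
qed

lemma Nv_iff: "f \<in> Nv \<longleftrightarrow> (\<forall>w. (\<forall>i. w * emb (coeff f i) \<in> range emb) \<longrightarrow> w \<in> range emb)"
proof (rule iffI)
  assume f: "f \<in> Nv"
  show "\<forall>w. (\<forall>i. w * emb (coeff f i) \<in> range emb) \<longrightarrow> w \<in> range emb"
  proof (intro allI impI)
    fix w assume h: "\<forall>i. w * emb (coeff f i) \<in> range emb"
    have "w \<in> frac_inv (range emb) (emb ` content_ideal f)"
    proof (unfold frac_inv_def mem_Collect_eq, intro ballI)
      fix x assume "x \<in> emb ` content_ideal f"
      then obtain r where x: "x = emb (\<Sum>i\<le>degree f. r i * coeff f i)"
        unfolding content_ideal_def by auto
      have "w * x = (\<Sum>i\<le>degree f. emb (r i) * (w * emb (coeff f i)))"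
        unfolding x
      proof -
        have "emb (\<Sum>i\<le>degree f. r i * coeff f i) = (\<Sum>i\<le>degree f. emb (r i) * emb (coeff f i))"
          by (simp add: emb_sum emb_mult)
        then show "w * emb (\<Sum>i\<le>degree f. r i * coeff f i) = (\<Sum>i\<le>degree f. emb (r i) * (w * emb (coeff f i)))"
          by (simp add: sum_distrib_left mult.left_commute)
      qed
      also have "\<dots> \<in> range emb"
      proof (rule R_sum)
        fix i show "emb (r i) * (w * emb (coeff f i)) \<in> range emb" using h R_mult by blast
      qed
      finally show "w * x \<in> range emb" .
    qed
    then show "w \<in> range emb" using vclos_imp[OF R_1] f unfolding Nv_def by auto
  qed
next
  assume h: "\<forall>w. (\<forall>i. w * emb (coeff f i) \<in> range emb) \<longrightarrow> w \<in> range emb"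
  have 1: "frac_inv (range emb) (emb ` content_ideal f) = range emb"
  proof
    show "frac_inv (range emb) (emb ` content_ideal f) \<subseteq> range emb"
    proof
      fix w assume w: "w \<in> frac_inv (range emb) (emb ` content_ideal f)"
      have "\<forall>i. w * emb (coeff f i) \<in> range emb"
      proof
        fix i have "emb (coeff f i) \<in> emb ` content_ideal f" using coeff_in_content by blast
        then show "w * emb (coeff f i) \<in> range emb" using w unfolding frac_inv_def by blast
      qed
      then show "w \<in> range emb" using h by simp
    qed
    show "range emb \<subseteq> frac_inv (range emb) (emb ` content_ideal f)"
      unfolding frac_inv_def by (auto simp: emb_mult[symmetric])
  qed
  have 2: "frac_inv (range emb) (range emb) = range emb"
  proof
    show "frac_inv (range emb) (range emb) \<subseteq> range emb"
    proof
      fix w assume "w \<in> frac_inv (range emb) (range emb)"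
      then have "w * 1 \<in> range emb" unfolding frac_inv_def using R_1 by blast
      then show "w \<in> range emb" by simp
    qed
    show "range emb \<subseteq> frac_inv (range emb) (range emb)"
      unfolding frac_inv_def by (auto simp: emb_mult[symmetric])
  qed
  show "f \<in> Nv" unfolding Nv_def vclos_def using 1 2 by simp
qed




lemma mccoy:
  fixes I :: "'a::idom set" and f g :: "'a poly"
  assumes I0: "0 \<in> I" and Iadd: "\<And>x y. x \<in> I \<Longrightarrow> y \<in> I \<Longrightarrow> x + y \<in> I"
    and Imul: "\<And>a x. x \<in> I \<Longrightarrow> a * x \<in> I"
    and Zfg: "\<forall>n. coeff (f * g) n \<in> I" and nZg: "\<not> (\<forall>n. coeff g n \<in> I)"
  shows "\<exists>r. r \<notin> I \<and> (\<forall>n. r * coeff f n \<in> I)"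
  using Zfg nZg
proof (induction "degree g" arbitrary: g rule: less_induct)
  case less
  have Idiff: "x - y \<in> I" if "x \<in> I" "y \<in> I" for x y
    using Iadd[OF that(1) Imul[OF that(2), of "-1"]] by simp
  have Isum: "sum h A \<in> I" if "\<And>k. k \<in> A \<Longrightarrow> h k \<in> I" for h and A :: "nat set"
    using that by (induction A rule: infinite_finite_induct) (auto simp: I0 Iadd)
  show ?case
  proof (cases "\<forall>i n. coeff f i * coeff g n \<in> I")
    case True
    from less.prems(2) obtain n where n: "coeff g n \<notin> I" by auto
    show ?thesis using True n by (intro exI[of _ "coeff g n"]) (auto simp: mult.commute)
  next
    case False
    define B where "B = {i. \<exists>n. coeff f i * coeff g n \<notin> I}"
    have Bne: "B \<noteq> {}" using False B_def by auto
    have Bfin: "finite B"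
    proof (rule finite_subset[of _ "{..degree f}"])
      show "B \<subseteq> {..degree f}"
      proof
        fix i assume "i \<in> B"
        then show "i \<in> {..degree f}" unfolding B_def using I0
          by (cases "i \<le> degree f") (auto simp: coeff_eq_0)
      qed
    qed simp
    define i where "i = Max B"
    have iB: "i \<in> B" using Bne Bfin i_def by simp
    have above: "coeff f j * coeff g n \<in> I" if "j > i" for j n
    proof (rule ccontr)
      assume "coeff f j * coeff g n \<notin> I"
      then have "j \<in> B" unfolding B_def by auto
      then have "j \<le> i" using Bfin i_def by simp
      then show False using that by simp
    qed
    define a where "a = coeff f i"
    define m where "m = degree g"
    define b where "b = coeff g m"
    have ab: "a * b \<in> I"
    proof -
      let ?t = "\<lambda>k. coeff f k * coeff g (i + m - k)"
      have tot: "sum ?t {..i+m} \<in> I" using less.prems(1) by (simp add: coeff_mult)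
      have rest: "sum ?t ({..i+m} - {i}) \<in> I"
      proof (rule Isum)
        fix k assume k: "k \<in> {..i+m} - {i}"
        show "?t k \<in> I"
        proof (cases "k < i")
          case True
          then have "i + m - k > degree g" unfolding m_def by simp
          then show ?thesis using I0 by (simp add: coeff_eq_0)
        next
          case False
          then have "k > i" using k by auto
          then show ?thesis using above by simp
        qed
      qed
      have "sum ?t {..i+m} = ?t i + sum ?t ({..i+m} - {i})"
        by (rule sum.remove) auto
      then have "?t i = sum ?t {..i+m} - sum ?t ({..i+m} - {i})" by simp
      also have "\<dots> \<in> I" using tot rest by (rule Idiff)
      finally show ?thesis unfolding a_def b_def by simp
    qed
    define g' where "g' = smult a g - monom (a * b) m"
    have cg': "coeff g' n = a * coeff g n - (if n = m then a * b else 0)" for n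
      unfolding g'_def by simp
    have Zfg': "\<forall>n. coeff (f * g') n \<in> I"
    proof
      fix n
      have "f * g' = smult a (f * g) - monom (a * b) m * f"
        unfolding g'_def by (simp add: algebra_simps)
      then have "coeff (f * g') n = a * coeff (f * g) n - (if n < m then 0 else (a * b) * coeff f (n - m))"
        by (simp add: coeff_monom_mult)
      also have "\<dots> \<in> I"
        using less.prems(1) ab I0 Imul Idiff by (auto simp: mult.commute[of "a*b"])
      finally show "coeff (f * g') n \<in> I" .
    qed
    have nZg': "\<not> (\<forall>n. coeff g' n \<in> I)"
    proof
      assume Z: "\<forall>n. coeff g' n \<in> I"
      from iB obtain n where n: "a * coeff g n \<notin> I" unfolding B_def a_def by auto
      have "a * coeff g n = coeff g' n + (if n = m then a * b else 0)" using cg'[of n] by simp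
      also have "\<dots> \<in> I" using Z ab I0 Iadd by auto
      finally show False using n by simp
    qed
    have mpos: "m > 0"
    proof (rule ccontr)
      assume "\<not> m > 0"
      then have "m = 0" by simp
      have "coeff g' n = 0" for n
      proof (cases "n = 0")
        case True then show ?thesis using \<open>m = 0\<close> by (simp add: cg' b_def)
      next
        case False
        then have "n > degree g" using \<open>m = 0\<close> m_def by simp
        then show ?thesis using \<open>m = 0\<close> by (simp add: cg' coeff_eq_0)
      qed
      then show False using nZg' I0 by simp
    qed
    have "degree g' \<le> m - 1"
    proof (rule degree_le, intro allI impI)
      fix n assume "m - 1 < n"
      then have "n \<ge> m" by simp
      then show "coeff g' n = 0"
        by (cases "n = m") (simp_all add: cg' b_def coeff_eq_0 m_def)
    qed
    then have "degree g' < degree g" using mpos m_def by simp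
    then show ?thesis using less.hyps Zfg' nZg' by blast
  qed
qed

lemma Nv_mult: assumes s: "s \<in> Nv" and t: "t \<in> Nv" shows "s * t \<in> Nv"
  unfolding Nv_iff
proof (intro allI impI)
  fix w assume h: "\<forall>i. w * emb (coeff (s * t) i) \<in> range emb"
  show "w \<in> range emb"
  proof (rule ccontr)
    assume nw: "w \<notin> range emb"
    define I where "I = {x. w * emb x \<in> range emb}"
    have I0: "0 \<in> I" unfolding I_def using R_0 by (simp add: emb_0)
    have Iadd: "x + y \<in> I" if "x \<in> I" "y \<in> I" for x y
      using that R_add unfolding I_def by (simp add: emb_add distrib_left)
    have Imul: "a * x \<in> I" if xI: "x \<in> I" for a x
    proof -
      have "w * emb (a * x) = emb a * (w * emb x)" by (simp add: emb_mult mult.left_commute)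
      moreover obtain d where "w * emb x = emb d" using xI unfolding I_def by auto
      ultimately have "w * emb (a * x) = emb (a * d)" by (simp add: emb_mult)
      then show ?thesis unfolding I_def by simp
    qed
    have Zst: "\<forall>n. coeff (s * t) n \<in> I" using h unfolding I_def by simp
    have nZt: "\<not> (\<forall>n. coeff t n \<in> I)" using t nw unfolding Nv_iff I_def mem_Collect_eq by blast
    obtain r where r: "r \<notin> I" "\<forall>n. r * coeff s n \<in> I"
      using mccoy[OF I0 Iadd Imul Zst nZt] by blast
    have "\<forall>i. (w * emb r) * emb (coeff s i) \<in> range emb"
      using r(2) unfolding I_def by (simp add: emb_mult mult.assoc)
    then have "w * emb r \<in> range emb" using s unfolding Nv_iff by blast
    then show False using r(1) unfolding I_def by simp
  qed
qed




lemma one_Nv: "1 \<in> Nv"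
  unfolding Nv_iff
proof (intro allI impI)
  fix w :: "'a fract" assume "\<forall>i. w * emb (coeff 1 i) \<in> range emb"
  then have "w * emb 1 \<in> range emb" by (metis coeff_1 of_bool_eq(2))
  then show "w \<in> range emb" by (simp add: emb_1)
qed

lemma Aring_rep: assumes "x \<in> Aring" shows "\<exists>g s. x = Fract g s \<and> s \<in> Nv \<and> s \<noteq> 0"
proof -
  from assms obtain g s where x: "x = Fract g s" "s \<in> Nv" unfolding Aring_def by auto
  show ?thesis
  proof (cases "s = 0")
    case True
    then have "x = Fract 0 1" using x by (simp add: fract_collapse)
    show ?thesis apply (rule exI[of _ 0], rule exI[of _ 1]) using \<open>x = Fract 0 1\<close> one_Nv by simp
  next
    case False then show ?thesis using x by blast
  qed
qed

lemma Aring_I: "s \<in> Nv \<Longrightarrow> Fract g s \<in> Aring" unfolding Aring_def by blast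
lemma Aring_poly: "Fract g 1 \<in> Aring" using Aring_I[OF one_Nv] .
lemma Aring_1: "1 \<in> Aring" using Aring_poly[of 1] by (simp add: fract_collapse)
lemma Aring_0: "0 \<in> Aring" using Aring_poly[of 0] by (simp add: fract_collapse)

lemma Aring_mult: assumes "x \<in> Aring" "y \<in> Aring" shows "x * y \<in> Aring"
proof -
  from assms obtain g s g' s' where "x = Fract g s" "s \<in> Nv" "y = Fract g' s'" "s' \<in> Nv"
    unfolding Aring_def by auto
  then show ?thesis by (simp add: Aring_I Nv_mult)
qed

lemma Aring_add: assumes "x \<in> Aring" "y \<in> Aring" shows "x + y \<in> Aring"
proof -
  from Aring_rep[OF assms(1)] obtain g s where "x = Fract g s" "s \<in> Nv" "s \<noteq> 0" by blast
  moreover from Aring_rep[OF assms(2)] obtain g' s' where "y = Fract g' s'" "s' \<in> Nv" "s' \<noteq> 0" by blast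
  ultimately show ?thesis by (simp add: Aring_I Nv_mult)
qed

lemma Aring_sum: "(\<And>i. i \<in> A \<Longrightarrow> f i \<in> Aring) \<Longrightarrow> sum f A \<in> Aring"
  by (induction A rule: infinite_finite_induct) (auto simp: Aring_0 Aring_add)

fun hcomb :: "'a::idom poly list \<Rightarrow> 'a poly" where
  "hcomb [] = 0"
| "hcomb (g # gs) = g + monom 1 (Suc (degree g)) * hcomb gs"

lemma hcomb_coeff:
  assumes "g \<in> set gs" "\<forall>i. P (coeff (hcomb gs) i)" "P 0"
  shows "P (coeff g i)"
  using assms(1,2)
proof (induction gs arbitrary: i)
  case Nil then show ?case by simp
next
  case (Cons h hs)
  have c: "coeff (hcomb (h # hs)) n = coeff h n + (if n < Suc (degree h) then 0 else coeff (hcomb hs) (n - Suc (degree h)))" for n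
    by (simp add: coeff_monom_mult)
  show ?case
  proof (cases "g = h")
    case True
    show ?thesis
    proof (cases "i \<le> degree h")
      case True
      have "P (coeff (hcomb (h#hs)) i)" using Cons.prems(2) by blast
      moreover have "coeff (hcomb (h#hs)) i = coeff h i" using c[of i] True by simp
      ultimately show ?thesis using \<open>g = h\<close> by simp
    next
      case False
      then show ?thesis using assms(3) \<open>g = h\<close> by (simp add: coeff_eq_0)
    qed
  next
    case False
    then have g: "g \<in> set hs" using Cons.prems(1) by simp
    have "\<forall>j. P (coeff (hcomb hs) j)"
    proof
      fix j
      have "coeff (hcomb (h # hs)) (j + Suc (degree h)) = coeff (hcomb hs) j"
        using c[of "j + Suc (degree h)"] by (simp add: coeff_eq_0)
      then show "P (coeff (hcomb hs) j)" using Cons.prems(2) by metis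
    qed
    then show ?thesis using Cons.IH g by blast
  qed
qed

lemma Fract_add1: "Fract (a + b) 1 = Fract a 1 + Fract b 1" by simp
lemma Fract_mult1: "Fract (a * b) 1 = Fract a 1 * Fract b 1" by simp

lemma Fract_cancel1: "s \<noteq> 0 \<Longrightarrow> Fract s 1 * Fract g s = Fract g 1" by (simp add: eq_fract)

lemma hcomb_in:
  assumes id: "is_ideal_of Aring J" and gs: "\<forall>g\<in>set gs. Fract g 1 \<in> J"
  shows "Fract (hcomb gs) 1 \<in> J"
  using gs
proof (induction gs)
  case Nil then show ?case using id unfolding is_ideal_of_def by (simp add: fract_collapse)
next
  case (Cons g gs)
  have "Fract (hcomb (g # gs)) 1 = Fract g 1 + Fract (monom 1 (Suc (degree g))) 1 * Fract (hcomb gs) 1"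
    unfolding hcomb.simps Fract_add1 Fract_mult1 ..
  also have "\<dots> \<in> J"
  proof -
    have a: "Fract g 1 \<in> J" using Cons.prems by simp
    have c: "Fract (hcomb gs) 1 \<in> J" using Cons by simp
    have b: "Fract (monom 1 (Suc (degree g))) 1 * Fract (hcomb gs) 1 \<in> J"
      using c id Aring_poly[of "monom 1 (Suc (degree g))"] unfolding is_ideal_of_def by blast
    show ?thesis using a b id unfolding is_ideal_of_def by blast
  qed
  finally show ?case .
qed

lemma GV_one:
  assumes J: "J \<in> GV (Aring :: 'a::idom poly fract set)" and n0: "0 \<notin> (Nv :: 'a poly set)"
  shows "1 \<in> J"
proof -
  have id: "is_ideal_of Aring J" and vc: "vclos Aring J = Aring"
    using J unfolding GV_def fin_gen_ideal_def by auto
  from J obtain F where F: "finite F" "F \<subseteq> J" "J = {\<Sum>x\<in>F. r x * x | r. \<forall>x\<in>F. r x \<in> Aring}"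
    unfolding GV_def fin_gen_ideal_def by blast
  have JA: "J \<subseteq> Aring" using id unfolding is_ideal_of_def by simp
  have "\<forall>x\<in>F. \<exists>g s. x = Fract g s \<and> s \<in> Nv \<and> s \<noteq> 0" using F(2) JA Aring_rep by blast
  then obtain gx sx where gs: "\<And>x. x \<in> F \<Longrightarrow> x = Fract (gx x) (sx x) \<and> sx x \<in> Nv \<and> sx x \<noteq> 0"
    by metis
  obtain xs where xs: "set xs = F" using finite_list[OF F(1)] by blast
  define h where "h = hcomb (map gx xs)"
  have gJ: "Fract (gx x) 1 \<in> J" if "x \<in> F" for x
  proof -
    have "Fract (gx x) 1 = Fract (sx x) 1 * x" using Fract_cancel1[of "sx x" "gx x"] gs[OF that] by metis
    moreover have "x \<in> J" using F(2) that by blast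
    then have "Fract (sx x) 1 * x \<in> J" using id Aring_poly[of "sx x"] unfolding is_ideal_of_def by blast
    ultimately show ?thesis by simp
  qed
  have hJ: "Fract h 1 \<in> J" unfolding h_def
    by (rule hcomb_in[OF id]) (use gJ xs in auto)
  have hNv: "h \<in> Nv" unfolding Nv_iff
  proof (intro allI impI)
    fix w :: "'a fract" assume hw: "\<forall>i. w * emb (coeff h i) \<in> range emb"
    have gw: "w * emb (coeff (gx x) i) \<in> range emb" if "x \<in> F" for x i
      using hcomb_coeff[of "gx x" "map gx xs" "\<lambda>c. w * emb c \<in> range emb"] hw that xs
      by (simp add: h_def emb_0 R_0)
    obtain a b where w: "w = Fract a b" "b \<noteq> 0" by (cases w) blast
    have emb_w: "w * emb c = Fract (a * c) b" for c unfolding w emb_def by simp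
    define W :: "'a poly fract" where "W = Fract [:a:] [:b:]"
    have Wx: "W * x \<in> Aring" if x: "x \<in> F" for x
    proof -
      have "b dvd coeff (smult a (gx x)) n" for n
      proof -
        obtain d where "w * emb (coeff (gx x) n) = emb d" using gw[OF x, of n] by auto
        then have "Fract (a * coeff (gx x) n) b = Fract d 1" unfolding emb_w by (simp add: emb_def)
        then have "a * coeff (gx x) n = d * b" using w(2) by (simp add: eq_fract)
        then show ?thesis by simp
      qed
      then obtain G where G: "smult a (gx x) = [:b:] * G" using const_poly_dvd_iff by blast
      have xe: "x = Fract (gx x) (sx x)" and sN: "sx x \<in> Nv" using gs[OF x] by auto
      have "W * x = Fract ([:a:] * gx x) ([:b:] * sx x)" unfolding W_def
        using xe mult_fract[of "[:a:]" "[:b:]" "gx x" "sx x"] by metis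
      also have "\<dots> = Fract ([:b:] * G) ([:b:] * sx x)" using G by simp
      also have "\<dots> = Fract G (sx x)" using w(2) by (intro mult_fract_cancel) simp
      finally show ?thesis using Aring_I[OF sN, of G] by simp
    qed
    have "W \<in> frac_inv Aring J" unfolding frac_inv_def
    proof (unfold mem_Collect_eq, intro ballI)
      fix j assume "j \<in> J"
      then obtain r where r: "j = (\<Sum>x\<in>F. r x * x)" "\<forall>x\<in>F. r x \<in> Aring" using F(3) by auto
      have "W * j = (\<Sum>x\<in>F. r x * (W * x))" unfolding r(1) by (simp add: sum_distrib_left mult.left_commute)
      also have "\<dots> \<in> Aring"
      proof (rule Aring_sum)
        fix x assume "x \<in> F" then show "r x * (W * x) \<in> Aring" using r(2) Wx Aring_mult by blast
      qed
      finally show "W * j \<in> Aring" .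
    qed
    then have "W \<in> Aring" using vclos_imp[OF Aring_1 vc] by blast
    then obtain f s where fs: "W = Fract f s" "s \<in> Nv" "s \<noteq> 0" using Aring_rep by blast
    then have "[:a:] * s = f * [:b:]" using w(2) unfolding W_def by (simp add: eq_fract)
    then have cs: "a * coeff s i = coeff f i * b" for i
      by (metis coeff_smult mult.commute mult_pCons_left mult_zero_left smult_0_right add_0_right pCons_0_0)
    have "\<forall>i. w * emb (coeff s i) \<in> range emb"
    proof
      fix i
      have "w * emb (coeff s i) = Fract (coeff f i * b) (1 * b)" using emb_w cs by simp
      also have "\<dots> = emb (coeff f i)" using w(2) unfolding emb_def
        by (metis mult.commute mult_fract_cancel)
      finally show "w * emb (coeff s i) \<in> range emb" by simp
    qed
    then show "w \<in> range emb" using fs(2) unfolding Nv_iff by blast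
  qed
  then have "h \<noteq> 0" using n0 by auto
  then have "1 = Fract 1 h * Fract h 1" by (simp add: eq_fract One_fract_def)
  also have "\<dots> \<in> J" using id hJ Aring_I[OF hNv] unfolding is_ideal_of_def by blast
  finally show ?thesis .
qed




lemma pmod: assumes "module sc" shows "module (pscale sc)"
proof -
  interpret imod sc using assms by (simp add: imod_def)
  show ?thesis by (rule pscale_module)
qed

lemma zero_Nv_all: assumes "(0::'a::idom poly) \<in> Nv" shows "(f::'a poly) \<in> Nv"
proof -
  have "\<forall>w::'a fract. w \<in> range emb"
    using assms unfolding Nv_iff by (simp add: emb_0 R_0)
  then show ?thesis unfolding Nv_iff by blast
qed

lemma locrel_refl:
  assumes m: "module sc" and s: "s \<in> Nv" shows "((g, s), (g, s)) \<in> locrel sc"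
proof -
  interpret pm: module "pscale sc" by (rule pmod[OF m])
  show ?thesis unfolding locrel_def using s one_Nv by force
qed

lemma Lact_one:
  assumes m: "module sc" and X: "X \<in> Lcar sc"
  shows "Lact sc 1 X = X"
proof -
  interpret pm: module "pscale sc" by (rule pmod[OF m])
  let ?P = "pscale sc"
  from X obtain g s where Xd: "X = locrel sc `` {(g, s)}" and s: "s \<in> Nv" unfolding Lcar_def by blast
  show ?thesis
  proof
    show "X \<subseteq> Lact sc 1 X"
    proof
      fix z assume z: "z \<in> X"
      have gs: "(g, s) \<in> X" using Xd locrel_refl[OF m s] by simp
      have "z \<in> locrel sc `` {(?P 1 g, 1 * s)}" using z Xd by simp
      moreover have f1: "(1::'a poly fract) = Fract 1 1" by (simp add: fract_collapse)
      ultimately show "z \<in> Lact sc 1 X" unfolding Lact_def using gs one_Nv by blast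
    qed
  next
    show "Lact sc 1 X \<subseteq> X"
    proof
      fix z assume "z \<in> Lact sc 1 X"
      then obtain f t g' s' where ft: "1 = Fract f t" "t \<in> Nv" and gs': "(g', s') \<in> X"
        and z: "z \<in> locrel sc `` {(?P f g', t * s')}"
        unfolding Lact_def by blast
      have t0: "t \<noteq> 0" using ft(1) by (auto simp: fract_collapse)
      have "Fract 1 1 = Fract f t" using ft(1) by (simp add: fract_collapse)
      then have ft': "f = t" using t0 by (simp add: eq_fract)
      from gs' Xd obtain u1 where u1: "u1 \<in> Nv" "s' \<in> Nv" "?P u1 (?P s' g - ?P s g') = 0"
        unfolding locrel_def by blast
      obtain g'' s'' where zd: "z = (g'', s'')" by (cases z)
      from z zd ft' obtain u2 where u2: "u2 \<in> Nv" "s'' \<in> Nv" "?P u2 (?P s'' (?P t g') - ?P (t * s') g'') = 0"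
        unfolding locrel_def by blast
      have e1: "?P (u1 * s') g = ?P (u1 * s) g'" using u1(3)
        by (simp add: pm.scale_right_diff_distrib)
      have e2: "?P (u2 * s'' * t) g' = ?P (u2 * t * s') g''" using u2(3)
        by (simp add: pm.scale_right_diff_distrib mult.assoc)
      define u where "u = u1 * u2 * t * s'"
      have uN: "u \<in> Nv" unfolding u_def using u1 u2 ft by (intro Nv_mult) auto
      have "?P u (?P s'' g) = ?P (u2 * t * s'') (?P (u1 * s') g)" unfolding u_def by (simp add: ac_simps)
      also have "\<dots> = ?P (u2 * t * s'') (?P (u1 * s) g')" by (simp only: e1)
      also have "\<dots> = ?P (u1 * s) (?P (u2 * s'' * t) g')" by (simp add: ac_simps)
      also have "\<dots> = ?P (u1 * s) (?P (u2 * t * s') g'')" by (simp only: e2)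
      also have "\<dots> = ?P u (?P s g'')" unfolding u_def by (simp add: ac_simps)
      finally have "?P u (?P s'' g - ?P s g'') = 0" by (simp add: pm.scale_right_diff_distrib)
      then have "((g, s), z) \<in> locrel sc" unfolding locrel_def zd using s u2(2) uN by blast
      then show "z \<in> X" using Xd by simp
    qed
  qed
qed

lemma degenerate:
  assumes m: "module sc" and n0: "(0::'a::idom poly) \<in> Nv"
  shows "locrel (sc :: 'a \<Rightarrow> 'm::ab_group_add \<Rightarrow> 'm) = UNIV"
proof -
  interpret pm: module "pscale sc" by (rule pmod[OF m])
  have all: "((g, s), (g', s')) \<in> locrel sc" for g s g' s'
    unfolding locrel_def using zero_Nv_all[OF n0] by (auto intro!: bexI[of _ 0])
  show ?thesis
  proof (rule set_eqI)
    fix p :: "('m poly \<times> 'a poly) \<times> ('m poly \<times> 'a poly)"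
    obtain g s g' s' where "p = ((g, s), (g', s'))" by (metis prod.collapse)
    then show "p \<in> locrel sc \<longleftrightarrow> p \<in> UNIV" using all by simp
  qed
qed

lemma Lw:
  assumes m: "module sc" and NL: "N \<subseteq> Lcar sc" and z: "Lzero sc \<in> N"
  shows "Lw_module sc N"
proof (cases "(0::'a::idom poly) \<in> Nv")
  case True
  have lr: "locrel sc = UNIV" using degenerate[OF m True] .
  have Lz: "Lzero sc = UNIV" unfolding Lzero_def lr by auto
  have LC: "Lcar sc = {UNIV}" unfolding Lcar_def lr using one_Nv by auto
  have N: "N = {UNIV}" using NL z Lz LC by auto
  have LA: "Lact sc j UNIV = UNIV" for j
  proof -
    obtain f t where "j = Fract f t" by (cases j)
    then show ?thesis unfolding Lact_def lr using zero_Nv_all[OF True] by blast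
  qed
  show ?thesis unfolding Lw_module_def N Lz using LA by auto
next
  case False
  have one: "1 \<in> J" if "J \<in> GV Aring" for J :: "'a poly fract set"
    using GV_one[OF that False] .
  show ?thesis unfolding Lw_module_def
  proof (intro conjI ballI allI impI)
    fix J x assume J: "J \<in> GV Aring" and x: "x \<in> N" and h: "\<forall>j\<in>J. Lact sc j x = Lzero sc"
    have "Lact sc 1 x = Lzero sc" using h one[OF J] by blast
    then show "x = Lzero sc" using Lact_one[OF m] x NL by auto
  next
    fix J :: "'a poly fract set" and \<phi>
    assume J: "J \<in> GV Aring"
      and h: "(\<forall>j\<in>J. \<phi> j \<in> N) \<and> (\<forall>j\<in>J. \<forall>k\<in>J. \<phi> (j + k) = Ladd sc (\<phi> j) (\<phi> k))
          \<and> (\<forall>a\<in>Aring. \<forall>j\<in>J. \<phi> (a * j) = Lact sc a (\<phi> j))"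
    have JA: "J \<subseteq> Aring" using J unfolding GV_def fin_gen_ideal_def is_ideal_of_def by auto
    show "\<exists>x\<in>N. \<forall>j\<in>J. \<phi> j = Lact sc j x"
    proof (intro bexI ballI)
      show "\<phi> 1 \<in> N" using h one[OF J] by blast
      fix j assume "j \<in> J"
      then have "\<phi> (j * 1) = Lact sc j (\<phi> 1)" using h JA one[OF J] by blast
      then show "\<phi> j = Lact sc j (\<phi> 1)" by simp
    qed
  qed
qed

theorem lemma3p6:
  fixes sc :: "'a::idom \<Rightarrow> 'm::ab_group_add \<Rightarrow> 'm"
  assumes "module sc"
    and "\<exists>x::'m. x \<noteq> 0"
  shows "LDW_module sc"
proof -
  have z: "Lzero sc \<in> Lcar sc" unfolding Lzero_def Lcar_def using one_Nv by blast
  show ?thesis unfolding LDW_module_def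
  proof (intro conjI allI impI)
    show "Lw_module sc (Lcar sc)" using Lw[OF assms(1) _ z] by simp
    fix N assume "Lsubmod sc N \<and> N \<noteq> {Lzero sc}"
    then show "Lw_module sc N" using Lw[OF assms(1)] unfolding Lsubmod_def by blast
  qed
qed


end
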